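(* Let $p$ be an odd prime and $M$ the sub-add move matrix. (a) If $p\equiv3\pmod8$ or $p\equiv7\pmod8$, then $\Gamma_{M,\,p}$ has no secondary cycles. (b) If $p\equiv5\pmod8$, then $\Gamma_{M,\,p}$ has secondary cycles.
   Context: The sub-add move matrix is $M=\begin{pmatrix}1&-1\\1&1\end{pmatrix}$. $\Gamma_{M,\,p}$ is the directed graph with vertex set $\mathbb Z_p^2$ and arcs $((a,b),(a-b,a+b))$ (mod $p$; loops allowed). Let $k$ be the $\mathbb Z_p$-order of $M$ (least positive integer with $M^k\equiv I\pmod p$; it equals $4t$ with $t$ the multiplicative order of $-4$ in $GF(p)$). A directed cycle is a cycle in the underlying undirected graph such that in the induced directed subgraph every vertex has in- and out-degree $1$; a loop is a directed $1$-cycle. A primary cycle is a directed cycle of length $k$; a secondary cycle is a directed cycle that is neither primary nor a $1$-cycle. *)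

theory Defs
  imports "HOL-Computational_Algebra.Primes" "HOL-Number_Theory.Cong" "Jordan_Normal_Form.Matrix"
begin

definition subadd_M :: "int mat" where
  "subadd_M = mat_of_rows_list 2 [[1, -1], [1, 1]]"

definition subadd_order :: "nat \<Rightarrow> nat" where
  "subadd_order p = (LEAST k. k > 0 \<and>
     (\<forall>i<2. \<forall>j<2. [(subadd_M ^\<^sub>m k) $$ (i, j) = (1\<^sub>m 2 :: int mat) $$ (i, j)] (mod int p)))"

text \<open>Vertex set Z_p^2, represented by pairs of canonical residues 0..p-1.\<close>
definition verts :: "nat \<Rightarrow> (int \<times> int) set" where
  "verts p = {0..<int p} \<times> {0..<int p}"

definition arc :: "nat \<Rightarrow> int \<times> int \<Rightarrow> int \<times> int \<Rightarrow> bool" where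
  "arc p u v \<longleftrightarrow> u \<in> verts p \<and>
     v = ((fst u - snd u) mod int p, (fst u + snd u) mod int p)"

definition directed_cycle :: "nat \<Rightarrow> (int \<times> int) list \<Rightarrow> bool" where
  "directed_cycle p cs \<longleftrightarrow> cs \<noteq> [] \<and> distinct cs \<and> set cs \<subseteq> verts p \<and>
     (\<forall>i < length cs. arc p (cs ! i) (cs ! ((i + 1) mod length cs))) \<and>
     (\<forall>v \<in> set cs. card {w \<in> set cs. arc p v w} = 1 \<and> card {u \<in> set cs. arc p u v} = 1)"

definition primary_cycle :: "nat \<Rightarrow> (int \<times> int) list \<Rightarrow> bool" where
  "primary_cycle p cs \<longleftrightarrow> directed_cycle p cs \<and> length cs = subadd_order p"

definition secondary_cycle :: "nat \<Rightarrow> (int \<times> int) list \<Rightarrow> bool" where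
  "secondary_cycle p cs \<longleftrightarrow> directed_cycle p cs \<and> \<not> primary_cycle p cs \<and> length cs \<noteq> 1"

end

theory Submission
  imports Defs "HOL-Number_Theory.Number_Theory"
begin

fun xy :: "nat \<Rightarrow> int \<times> int" where
  "xy 0 = (1, 0)"
| "xy (Suc n) = (fst (xy n) - snd (xy n), fst (xy n) + snd (xy n))"

lemma Mpow: "subadd_M ^\<^sub>m n = mat 2 2 (\<lambda>(i,j). if i = j then fst (xy n) else if i = 0 then - snd (xy n) else snd (xy n))"
proof (induction n)
  case 0
  show ?case by (auto simp: subadd_M_def mat_of_rows_list_def)
next
  case (Suc n)
  show ?case
  proof (rule eq_matI)
    fix i j assume "i < dim_row (mat 2 2 (\<lambda>(i,j). if i = j then fst (xy (Suc n)) else if i = 0 then - snd (xy (Suc n)) else snd (xy (Suc n))))"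
      "j < dim_col (mat 2 2 (\<lambda>(i,j). if i = j then fst (xy (Suc n)) else if i = 0 then - snd (xy (Suc n)) else snd (xy (Suc n))))"
    then have ij: "i < 2" "j < 2" by auto
    then have "i = 0 \<or> i = 1" "j = 0 \<or> j = 1" by auto
    then show "(subadd_M ^\<^sub>m Suc n) $$ (i, j) = mat 2 2 (\<lambda>(i,j). if i = j then fst (xy (Suc n)) else if i = 0 then - snd (xy (Suc n)) else snd (xy (Suc n))) $$ (i, j)"
      using ij unfolding pow_mat.simps Suc.IH by (auto simp: subadd_M_def mat_of_rows_list_def scalar_prod_def row_def col_def)
  qed (simp_all only: pow_mat.simps Suc.IH, auto simp: subadd_M_def mat_of_rows_list_def)
qed

lemma all2: "(\<forall>i<(2::nat). Q i) \<longleftrightarrow> Q 0 \<and> Q 1"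
  by (auto simp: numeral_2_eq_2 less_Suc_eq)

definition QI :: "nat \<Rightarrow> nat \<Rightarrow> bool" where
  "QI p k \<longleftrightarrow> (\<forall>i<2. \<forall>j<2. [(subadd_M ^\<^sub>m k) $$ (i, j) = (1\<^sub>m 2 :: int mat) $$ (i, j)] (mod int p))"

lemma QI_iff: "QI p k \<longleftrightarrow> [fst (xy k) = 1] (mod int p) \<and> [snd (xy k) = 0] (mod int p)"
proof -
  have "[- snd (xy k) = 0] (mod int p) \<longleftrightarrow> [snd (xy k) = 0] (mod int p)"
    by (metis add.inverse_neutral cong_minus_minus_iff)
  then show ?thesis unfolding QI_def all2 by (auto simp: Mpow)
qed

lemma order_def': "subadd_order p = (LEAST k. k > 0 \<and> QI p k)"
  unfolding subadd_order_def QI_def by simp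

lemma xy4: "xy (Suc (Suc (Suc (Suc n)))) = (-4 * fst (xy n), -4 * snd (xy n))"
  by (simp add: algebra_simps)

lemma xy4j: "xy (4 * j) = ((-4) ^ j, 0)"
proof (induction j)
  case 0 then show ?case by simp
next
  case (Suc j)
  have "4 * Suc j = Suc (Suc (Suc (Suc (4 * j))))" by simp
  then show ?case using Suc by (simp only: xy4) simp
qed

lemma eigen:
  fixes c :: int
  assumes "int p dvd c^2 + 1"
  shows "[fst (xy n) + c * snd (xy n) = (1 + c) ^ n] (mod int p)"
proof (induction n)
  case 0 then show ?case by simp
next
  case (Suc n)
  define X where "X = fst (xy n)"
  define Y where "Y = snd (xy n)"
  have IH: "int p dvd (X + c * Y) - (1 + c) ^ n" using Suc unfolding X_def Y_def
    by (metis cong_iff_dvd_diff cong_sym_eq)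
  have eq: "(X - Y) + c * (X + Y) - (1 + c) ^ Suc n = (1 + c) * ((X + c * Y) - (1 + c) ^ n) - Y * (c^2 + 1)"
    by (simp add: algebra_simps power2_eq_square)
  have "int p dvd (X - Y) + c * (X + Y) - (1 + c) ^ Suc n"
    unfolding eq by (intro dvd_diff dvd_mult IH assms)
  then show ?case unfolding X_def Y_def by (simp add: cong_iff_dvd_diff)
qed

definition F :: "nat \<Rightarrow> int \<times> int \<Rightarrow> int \<times> int" where
  "F p u = ((fst u - snd u) mod int p, (fst u + snd u) mod int p)"

lemma arc_F: "arc p u v \<longleftrightarrow> u \<in> verts p \<and> v = F p u"
  unfolding arc_def F_def by simp

lemma iterF: assumes "0 \<le> a" "a < int p" "0 \<le> b" "b < int p" shows "(F p ^^ n) (a, b) = ((fst (xy n) * a - snd (xy n) * b) mod int p, (snd (xy n) * a + fst (xy n) * b) mod int p)"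
proof (induction n)
  case 0 then show ?case using assms by simp
next
  case (Suc n)
  define X where "X = fst (xy n)"
  define Y where "Y = snd (xy n)"
  have "(F p ^^ Suc n) (a, b) = F p ((X * a - Y * b) mod int p, (Y * a + X * b) mod int p)"
    using Suc by (simp add: X_def Y_def)
  also have "\<dots> = ((X * a - Y * b - (Y * a + X * b)) mod int p, (X * a - Y * b + (Y * a + X * b)) mod int p)"
    unfolding F_def by (simp add: mod_diff_eq mod_add_eq)
  also have "\<dots> = (((X - Y) * a - (X + Y) * b) mod int p, ((X + Y) * a + (X - Y) * b) mod int p)"
    by (simp add: algebra_simps)
  finally show ?case by (simp add: X_def Y_def)
qed

lemma modsuc: "(a::nat) < n \<Longrightarrow> (a + 1) mod n = (if a + 1 = n then 0 else a + 1)"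
  by auto

lemma cycle_of:
  assumes ne: "cs \<noteq> []" and dist: "distinct cs" and sub: "set cs \<subseteq> verts p"
    and step: "\<And>i. i < length cs \<Longrightarrow> cs ! ((i+1) mod length cs) = F p (cs ! i)"
  shows "directed_cycle p cs"
proof -
  let ?n = "length cs"
  have n0: "?n > 0" using ne by simp
  have arcs: "\<forall>i < ?n. arc p (cs ! i) (cs ! ((i + 1) mod ?n))"
    using step sub by (auto simp: arc_F)
  have deg: "card {w \<in> set cs. arc p v w} = 1 \<and> card {u \<in> set cs. arc p u v} = 1" if v: "v \<in> set cs" for v
  proof -
    obtain j where j: "j < ?n" "v = cs ! j" using v by (metis in_set_conv_nth)
    have "{w \<in> set cs. arc p v w} = {F p v}"
    proof -
      have "F p v \<in> set cs" using step[OF j(1)] j n0 by (metis nth_mem mod_less_divisor)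
      then show ?thesis using v sub by (auto simp: arc_F)
    qed
    moreover have "\<exists>u0. {u \<in> set cs. arc p u v} = {u0}"
    proof -
      define i0 where "i0 = (if j = 0 then ?n - 1 else j - 1)"
      have i0: "i0 < ?n" using n0 j(1) unfolding i0_def by auto
      have "(i0 + 1) mod ?n = j"
        using j(1) n0 i0 unfolding modsuc[OF i0] unfolding i0_def by auto
      then have in0: "arc p (cs ! i0) v" using step[OF i0] sub i0 j by (auto simp: arc_F)
      have uniq: "u = cs ! i0" if uin: "u \<in> set cs" and ua: "arc p u v" for u
      proof -
        obtain i where i: "i < ?n" "u = cs ! i" using uin by (auto simp: in_set_conv_nth)
        have "cs ! ((i+1) mod ?n) = cs ! ((i0+1) mod ?n)"
          using step[OF i(1)] step[OF i0] ua in0 i by (auto simp: arc_F)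
        then have "(i+1) mod ?n = (i0+1) mod ?n"
          using dist n0 by (simp add: nth_eq_iff_index_eq)
        then have "i = i0" using i(1) i0 unfolding modsuc[OF i(1)] modsuc[OF i0]
          by (auto split: if_splits)
        then show ?thesis using i by simp
      qed
      show ?thesis using in0 uniq i0 v by (intro exI[of _ "cs ! i0"]) auto
    qed
    ultimately show ?thesis by auto
  qed
  show ?thesis unfolding directed_cycle_def using ne dist sub arcs deg by blast
qed

lemma cycle_iter:
  assumes "directed_cycle p cs"
  shows "\<And>i. i < length cs \<Longrightarrow> cs ! i = (F p ^^ i) (cs ! 0)"
    and "(F p ^^ length cs) (cs ! 0) = cs ! 0"
proof -
  let ?n = "length cs"
  have step: "cs ! ((i+1) mod ?n) = F p (cs ! i)" if "i < ?n" for i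
    using assms that unfolding directed_cycle_def by (simp add: arc_F)
  show it: "cs ! i = (F p ^^ i) (cs ! 0)" if "i < ?n" for i
    using that
  proof (induction i)
    case 0 then show ?case by simp
  next
    case (Suc i)
    then have "cs ! Suc i = F p (cs ! i)" using step[of i] by simp
    then show ?case using Suc by simp
  qed
  have n0: "?n > 0" using assms unfolding directed_cycle_def by simp
  then obtain m where m: "?n = Suc m" by (metis gr0_implies_Suc)
  have "(F p ^^ ?n) (cs ! 0) = F p (cs ! m)" using it[of m] m by simp
  also have "\<dots> = cs ! ((m+1) mod ?n)" using step[of m] m by simp
  also have "\<dots> = cs ! 0" using m by simp
  finally show "(F p ^^ ?n) (cs ! 0) = cs ! 0" .
qed

lemma fermat_int:
  assumes "prime p" "\<not> int p dvd a"
  shows "[a ^ (p - 1) = 1] (mod int p)"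
proof -
  have p0: "p > 0" using assms(1) prime_gt_0_nat by blast
  define a' where "a' = nat (a mod int p)"
  have ia: "int a' = a mod int p" using p0 unfolding a'_def by simp
  have "\<not> p dvd a'"
  proof
    assume "p dvd a'"
    then have "int p dvd int a'" by simp
    then have "int p dvd a mod int p" using ia by simp
    then show False using assms(2) by (simp add: dvd_mod_iff)
  qed
  then have "[a' ^ (p - 1) = 1] (mod p)" using fermat_theorem assms(1) by blast
  then have "[int a' ^ (p - 1) = 1] (mod int p)"
    by (metis cong_int_iff of_nat_1 of_nat_power)
  moreover have "[int a' ^ (p - 1) = a ^ (p - 1)] (mod int p)"
    using ia by (intro cong_pow) simp
  ultimately show ?thesis by (meson cong_sym cong_trans)
qed

lemma key_a:
  assumes pr: "prime p" and p4: "p mod 4 = 3" and d: "int p dvd u^2 + w^2"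
  shows "int p dvd w"
proof (rule ccontr)
  assume nw: "\<not> int p dvd w"
  define h where "h = (p - 1) div 2"
  have oh: "odd h" and ph: "p - 1 = 2 * h" using p4 unfolding h_def by presburger+
  have p3: "p \<ge> 3" using p4 pr prime_ge_2_nat[OF pr] by presburger
  have c1: "[u^2 = -(w^2)] (mod int p)" using d by (simp add: cong_iff_dvd_diff)
  have "[(u^2)^h = (-(w^2))^h] (mod int p)" by (rule cong_pow[OF c1])
  moreover have "u ^ (p - 1) = (u^2)^h" "w ^ (p - 1) = (w^2)^h" unfolding ph by (simp_all add: power_mult)
  ultimately have c2: "[u ^ (p - 1) = - (w ^ (p - 1))] (mod int p)"
    using oh by simp
  have fw: "[w ^ (p - 1) = 1] (mod int p)" using fermat_int[OF pr nw] .
  have c3: "[u ^ (p - 1) = -1] (mod int p)"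
    using c2 cong_minus_minus_iff fw cong_trans by metis
  show False
  proof (cases "int p dvd u")
    case True
    moreover have "p - 1 = Suc (p - 2)" using p3 by simp
    then have "u ^ (p - 1) = u * u ^ (p - 2)" by simp
    ultimately have "int p dvd u ^ (p - 1)" by simp
    then have "int p dvd -1" using c3 by (metis cong_dvd_iff)
    then show False using p3 by simp
  next
    case False
    then have "[u ^ (p - 1) = 1] (mod int p)" using fermat_int[OF pr] by blast
    then have "[1 = -1] (mod int p)" using c3 by (meson cong_sym cong_trans)
    then have "int p dvd 2" by (simp add: cong_iff_dvd_diff)
    then have "int p \<le> 2" by (rule zdvd_imp_le) simp
    then show False using p3 by simp
  qed
qed

lemma sqrt_minus1:
  assumes pr: "prime p" and p4: "p mod 4 = 1"
  shows "\<exists>c::int. int p dvd c^2 + 1"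
proof -
  obtain g where g: "residue_primroot p g" using prime_primitive_root_exists[OF _ pr] prime_gt_1_nat[OF pr] by blast
  have og: "ord p g = p - 1" using g pr by (simp add: residue_primroot_def totient_prime)
  define q where "q = (p - 1) div 4"
  have pq: "p - 1 = 4 * q" using p4 unfolding q_def by presburger
  have p5: "p \<ge> 5" using p4 prime_ge_2_nat[OF pr] by presburger
  have q0: "q > 0" using pq p5 by simp
  define h where "h = g ^ (2 * q)"
  have "[g ^ (p - 1) = 1] (mod p)" using og ord_divides[of g "p - 1" p] by simp
  moreover have "h ^ 2 = g ^ (p - 1)"
  proof -
    have "h ^ 2 = g ^ (2 * q * 2)" unfolding h_def by (rule power_mult[symmetric])
    also have "2 * q * 2 = p - 1" using pq by simp
    finally show ?thesis .
  qed
  ultimately have "[h ^ 2 = 1] (mod p)" by simp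
  then have "[int h ^ 2 = 1] (mod int p)" by (metis cong_int_iff of_nat_1 of_nat_power)
  then have "int p dvd (int h - 1) * (int h + 1)"
    by (simp add: cong_iff_dvd_diff power2_eq_square algebra_simps)
  moreover have "\<not> int p dvd int h - 1"
  proof
    assume "int p dvd int h - 1"
    then have "[int h = 1] (mod int p)" by (simp add: cong_iff_dvd_diff)
    then have "[h = 1] (mod p)" by (metis cong_int_iff of_nat_1)
    then have "p - 1 dvd 2 * q" using og ord_divides[of g "2 * q" p] unfolding h_def by simp
    then have "p - 1 \<le> 2 * q" using q0 by (simp add: dvd_imp_le)
    then show False using pq q0 by simp
  qed
  ultimately have "int p dvd int h + 1" using pr by (simp add: prime_dvd_mult_iff)
  moreover have "(int (g ^ q))^2 = int h" unfolding h_def by (simp add: power_mult[symmetric] mult.commute)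
  ultimately show ?thesis by (intro exI[of _ "int (g ^ q)"]) simp
qed

lemma F00: "F p (0, 0) = (0, 0)" unfolding F_def by simp

lemma order_props:
  assumes "QI p n" "n > 0"
  shows "subadd_order p \<le> n" "subadd_order p > 0" "QI p (subadd_order p)"
proof -
  have ex: "\<exists>k. k > 0 \<and> QI p k" using assms by blast
  show "subadd_order p \<le> n" unfolding order_def' using assms by (intro Least_le) simp
  show "subadd_order p > 0" "QI p (subadd_order p)" unfolding order_def' using LeastI_ex[OF ex] by auto
qed

lemma part_a:
  assumes pr: "prime p" and p4: "p mod 4 = 3" and sc: "secondary_cycle p cs"
  shows False
proof -
  let ?P = "int p"
  have p3: "p \<ge> 3" using p4 prime_ge_2_nat[OF pr] by presburger
  have dc: "directed_cycle p cs" and nk: "length cs \<noteq> subadd_order p" and n1: "length cs \<noteq> 1"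
    using sc unfolding secondary_cycle_def primary_cycle_def by auto
  let ?n = "length cs"
  have ne: "cs \<noteq> []" and dist: "distinct cs" and sub: "set cs \<subseteq> verts p"
    using dc unfolding directed_cycle_def by auto
  have "?n > 0" using ne by simp
  then have n2: "?n \<ge> 2" using n1 by linarith
  obtain a b where ab: "cs ! 0 = (a, b)" by (cases "cs ! 0") auto
  have "cs ! 0 \<in> verts p" using sub ne by auto
  then have ar: "0 \<le> a" "a < ?P" "0 \<le> b" "b < ?P" using ab unfolding verts_def by auto
  have "cs ! 1 = (F p ^^ 1) (cs ! 0)" using cycle_iter(1)[OF dc, of 1] n2 by simp
  moreover have "cs ! 1 \<noteq> cs ! 0" using nth_eq_iff_index_eq[OF dist, of 1 0] n2 ne by simp
  ultimately have nz: "(a, b) \<noteq> (0, 0)" using ab F00 by auto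
  define X where "X = fst (xy ?n)"
  define Y where "Y = snd (xy ?n)"
  have "(F p ^^ ?n) (a, b) = (a, b)" using cycle_iter(2)[OF dc] ab by simp
  then have e: "(X * a - Y * b) mod ?P = a" "(Y * a + X * b) mod ?P = b"
    using iterF[OF ar] unfolding X_def Y_def by auto
  have e1: "?P dvd (X - 1) * a - Y * b"
  proof -
    have "[X * a - Y * b = a] (mod ?P)" using e(1) ar by (simp add: cong_def)
    then show ?thesis by (simp add: cong_iff_dvd_diff algebra_simps)
  qed
  have e2: "?P dvd Y * a + (X - 1) * b"
  proof -
    have "[Y * a + X * b = b] (mod ?P)" using e(2) ar by (simp add: cong_def)
    then show ?thesis by (simp add: cong_iff_dvd_diff algebra_simps)
  qed
  define A where "A = X - 1"
  have ea: "((A^2 + Y^2) * a) = A * (A * a - Y * b) + Y * (Y * a + A * b)"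
    by (simp add: algebra_simps power2_eq_square)
  have eb: "((A^2 + Y^2) * b) = A * (Y * a + A * b) - Y * (A * a - Y * b)"
    by (simp add: algebra_simps power2_eq_square)
  have e1': "?P dvd A * a - Y * b" and e2': "?P dvd Y * a + A * b" using e1 e2 unfolding A_def by auto
  have da: "?P dvd (A^2 + Y^2) * a" unfolding ea
    by (rule dvd_add; rule dvd_mult; rule e1' e2')
  have db: "?P dvd (A^2 + Y^2) * b" unfolding eb
    by (rule dvd_diff; rule dvd_mult; rule e1' e2')
  have prP: "prime ?P" using pr by simp
  have "\<not> ?P dvd a \<or> \<not> ?P dvd b"
  proof -
    have "a \<noteq> 0 \<or> b \<noteq> 0" using nz by auto
    then show ?thesis using ar zdvd_not_zless by fastforce
  qed
  then have dsum: "?P dvd A^2 + Y^2" using da db prP by (auto simp: prime_dvd_mult_iff)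
  have dA: "?P dvd A" using key_a[OF pr p4, of Y A] dsum by (simp add: add.commute)
  have dY: "?P dvd Y" using key_a[OF pr p4, of A Y] dsum by simp
  have Qn: "QI p ?n" unfolding QI_iff using dA dY unfolding A_def X_def Y_def
    by (simp add: cong_iff_dvd_diff)
  note op = order_props[OF Qn \<open>?n > 0\<close>]
  define k where "k = subadd_order p"
  have kn: "k < ?n" "k > 0" using op nk unfolding k_def by auto
  have c1: "[fst (xy k) = 1] (mod ?P)" and c0: "[snd (xy k) = 0] (mod ?P)" using op(3) unfolding QI_iff k_def by auto
  have "[fst (xy k) * a - snd (xy k) * b = 1 * a - 0 * b] (mod ?P)"
    by (intro cong_diff cong_mult c1 c0 cong_refl)
  moreover have "[snd (xy k) * a + fst (xy k) * b = 0 * a + 1 * b] (mod ?P)"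
    by (intro cong_add cong_mult c1 c0 cong_refl)
  ultimately have "(F p ^^ k) (a, b) = (a, b)" using iterF[OF ar, of k] ar by (simp add: cong_def)
  then have "cs ! k = cs ! 0" using cycle_iter(1)[OF dc, of k] kn ab by simp
  then show False using nth_eq_iff_index_eq[OF dist, of k 0] kn ne by simp
qed

lemma sq_facts:
  fixes c :: int
  assumes d: "int p dvd c^2 + 1" and om: "odd m"
  shows "[(1+c)^(2*m) = (2*c)^m] (mod int p)" "[(1-c)^(2*m) = -((2*c)^m)] (mod int p)"
proof -
  have e1: "(1+c)^2 - 2*c = c^2 + 1" by (simp add: algebra_simps power2_eq_square)
  have "[(1+c)^2 = 2*c] (mod int p)" unfolding cong_iff_dvd_diff e1 by (rule d)
  then have "[((1+c)^2)^m = (2*c)^m] (mod int p)" by (rule cong_pow)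
  then show "[(1+c)^(2*m) = (2*c)^m] (mod int p)" by (simp add: power_mult)
  have e2: "(1-c)^2 - (-(2*c)) = c^2 + 1" by (simp add: algebra_simps power2_eq_square)
  have "[(1-c)^2 = -(2*c)] (mod int p)" unfolding cong_iff_dvd_diff e2 by (rule d)
  then have "[((1-c)^2)^m = (-(2*c))^m] (mod int p)" by (rule cong_pow)
  then show "[(1-c)^(2*m) = -((2*c)^m)] (mod int p)" using om by (simp add: power_mult)
qed

lemma part_b:
  assumes pr: "prime p" and p8: "p mod 8 = 5"
  shows "\<exists>cs. secondary_cycle p cs"
proof -
  let ?P = "int p"
  have p5: "p \<ge> 5" using p8 prime_ge_2_nat[OF pr] by presburger
  have prP: "prime ?P" using pr by simp
  define m where "m = (p - 1) div 4"
  have om: "odd m" and pm: "p - 1 = 4 * m" using p8 unfolding m_def by presburger+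
  have m0: "m > 0" using pm p5 by simp
  have not2: "\<not> ?P dvd 2"
  proof
    assume "?P dvd 2" then have "?P \<le> 2" by (rule zdvd_imp_le) simp
    then show False using p5 by simp
  qed
  have "p mod 4 = 1" using p8 by presburger
  then obtain c0 :: int where c0: "?P dvd c0^2 + 1" using sqrt_minus1[OF pr] by blast
  have nd: "\<not> ?P dvd 1 + c" if cd: "?P dvd c^2 + 1" for c :: int
  proof
    assume "?P dvd 1 + c"
    then have "?P dvd (1 + c) * (c - 1)" by (rule dvd_mult2)
    moreover have "c^2 + 1 = (1 + c) * (c - 1) + 2" by (simp add: algebra_simps power2_eq_square)
    ultimately have "?P dvd 2" using cd by (metis dvd_add_right_iff)
    then show False using not2 by simp
  qed
  have ferm: "[(1+c)^(4*m) = 1] (mod ?P)" if cd: "?P dvd c^2 + 1" for c :: int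
    using fermat_int[OF pr nd[OF cd]] pm by simp
  obtain c :: int where c: "?P dvd c^2 + 1" and s1: "[(1+c)^(2*m) = 1] (mod ?P)"
  proof -
    define s where "s = (1+c0)^(2*m)"
    have "s^2 = (1+c0)^(4*m)" unfolding s_def by (simp add: power_mult[symmetric] mult.commute)
    then have "[s^2 = 1] (mod ?P)" using ferm[OF c0] by simp
    then have "?P dvd (s - 1) * (s + 1)" by (simp add: cong_iff_dvd_diff power2_eq_square algebra_simps)
    then have "?P dvd s - 1 \<or> ?P dvd s + 1" using prP by (simp add: prime_dvd_mult_iff)
    then show ?thesis
    proof
      assume "?P dvd s - 1"
      then have "[(1+c0)^(2*m) = 1] (mod ?P)" unfolding s_def by (simp add: cong_iff_dvd_diff)
      then show ?thesis using that c0 by blast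
    next
      assume "?P dvd s + 1"
      then have sm: "[s = -1] (mod ?P)" by (simp add: cong_iff_dvd_diff)
      have "[(1-c0)^(2*m) = -((2*c0)^m)] (mod ?P)" using sq_facts(2)[OF c0 om] .
      moreover have "[-((2*c0)^m) = -s] (mod ?P)" using sq_facts(1)[OF c0 om] unfolding s_def
        by (simp add: cong_minus_minus_iff cong_sym)
      moreover have "[-s = 1] (mod ?P)" using sm by (metis cong_minus_minus_iff minus_minus)
      ultimately have "[(1 + (-c0))^(2*m) = 1] (mod ?P)" by (metis cong_trans diff_conv_add_uminus)
      moreover have "?P dvd (-c0)^2 + 1" using c0 by simp
      ultimately show ?thesis using that by blast
    qed
  qed
  have nu: "[(1-c)^(2*m) = -1] (mod ?P)"
  proof -
    have "[-((2*c)^m) = -((1+c)^(2*m))] (mod ?P)" using sq_facts(1)[OF c om]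
      by (simp add: cong_minus_minus_iff cong_sym)
    moreover have "[-((1+c)^(2*m)) = -1] (mod ?P)" using s1 by (simp add: cong_minus_minus_iff)
    ultimately show ?thesis using sq_facts(2)[OF c om] by (meson cong_trans)
  qed
  define \<mu> where "\<mu> = 1 + c"
  have copr: "coprime \<mu> ?P" using nd[OF c] prP unfolding \<mu>_def
    by (metis coprime_commute prime_imp_coprime)
  define d where "d = (LEAST d. 0 < d \<and> [\<mu>^d = 1] (mod ?P))"
  have ex: "\<exists>d. 0 < d \<and> [\<mu>^d = 1] (mod ?P)" using s1 m0 unfolding \<mu>_def by (intro exI[of _ "2*m"]) simp
  have dpos: "d > 0" and dmu: "[\<mu>^d = 1] (mod ?P)" using LeastI_ex[OF ex] unfolding d_def by auto
  have dmin: "d \<le> e" if "0 < e" "[\<mu>^e = 1] (mod ?P)" for e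
    unfolding d_def using that by (intro Least_le) simp
  have powmod: "[\<mu>^j = \<mu>^(j mod d)] (mod ?P)" for j
  proof -
    have "\<mu>^j = \<mu>^(d * (j div d) + j mod d)" by simp
    also have "\<dots> = (\<mu>^d)^(j div d) * \<mu>^(j mod d)" by (simp only: power_add power_mult)
    finally have "\<mu>^j = (\<mu>^d)^(j div d) * \<mu>^(j mod d)" .
    moreover have "[(\<mu>^d)^(j div d) * \<mu>^(j mod d) = 1^(j div d) * \<mu>^(j mod d)] (mod ?P)"
      by (intro cong_mult cong_pow dmu cong_refl)
    ultimately show ?thesis by simp
  qed
  have ddvd: "d dvd 2 * m"
  proof -
    have "[\<mu>^(2*m mod d) = 1] (mod ?P)" using powmod[of "2*m"] s1 unfolding \<mu>_def
      by (meson cong_sym cong_trans)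
    then have "\<not> 0 < 2*m mod d" using dmin[of "2*m mod d"] dpos by (meson mod_less_divisor not_le)
    then show ?thesis by (simp add: mod_eq_0_iff_dvd)
  qed
  have d1: "d \<noteq> 1"
  proof
    assume "d = 1"
    then have "[\<mu> = 1] (mod ?P)" using dmu by simp
    then have "?P dvd c" unfolding \<mu>_def by (simp add: cong_iff_dvd_diff)
    then have "?P dvd c^2" by (simp add: power2_eq_square)
    then have "?P dvd 1" using c by (metis dvd_add_right_iff)
    then show False using p5 by simp
  qed
  have inj0: "i = j" if "i \<le> j" "j < d" "[\<mu>^i = \<mu>^j] (mod ?P)" for i j
  proof (rule ccontr)
    assume "i \<noteq> j"
    then have ij: "0 < j - i" "j - i < d" using that by auto
    have "\<mu>^j = \<mu>^i * \<mu>^(j-i)" using that(1) by (simp add: power_add[symmetric])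
    then have "[\<mu>^i * \<mu>^(j-i) = \<mu>^i * 1] (mod ?P)" using that(3) by (simp add: cong_sym)
    moreover have "coprime (\<mu>^i) ?P" using copr by simp
    ultimately have "[\<mu>^(j-i) = 1] (mod ?P)" using cong_mult_lcancel by blast
    then show False using dmin[OF ij(1)] ij(2) by simp
  qed
  have inj: "i = j" if "i < d" "j < d" "[\<mu>^i = \<mu>^j] (mod ?P)" for i j
  proof (cases "i \<le> j")
    case True then show ?thesis using inj0[of i j] that by blast
  next
    case False then show ?thesis using inj0[of j i] that cong_sym by fastforce
  qed
  define v where "v = (1::int, (-c) mod ?P)"
  have vr: "0 \<le> (1::int)" "1 < ?P" "0 \<le> (-c) mod ?P" "(-c) mod ?P < ?P" using p5 by auto
  have vj: "(F p ^^ j) v = (\<mu>^j mod ?P, (-c*\<mu>^j) mod ?P)" for j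
  proof -
    define X where "X = fst (xy j)"
    define Y where "Y = snd (xy j)"
    have eig: "[X + c*Y = \<mu>^j] (mod ?P)" using eigen[OF c] unfolding X_def Y_def \<mu>_def .
    have cm: "[(-c) mod ?P = -c] (mod ?P)" by simp
    have "[X*1 - Y*((-c) mod ?P) = X*1 - Y*(-c)] (mod ?P)"
      by (intro cong_diff cong_mult cong_refl cm)
    moreover have "X*1 - Y*(-c) = X + c*Y" by simp
    ultimately have k1: "[X*1 - Y*((-c) mod ?P) = \<mu>^j] (mod ?P)" using eig by (metis cong_trans)
    have "[Y*1 + X*((-c) mod ?P) = Y*1 + X*(-c)] (mod ?P)"
      by (intro cong_add cong_mult cong_refl cm)
    moreover have "[Y*1 + X*(-c) = -c*(X + c*Y)] (mod ?P)"
    proof -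
      have "Y*1 + X*(-c) - (-c*(X + c*Y)) = Y * (c^2 + 1)" by (simp add: algebra_simps power2_eq_square)
      then show ?thesis unfolding cong_iff_dvd_diff using c by simp
    qed
    moreover have "[-c*(X + c*Y) = -c*\<mu>^j] (mod ?P)" by (intro cong_mult cong_refl eig)
    ultimately have k2: "[Y*1 + X*((-c) mod ?P) = -c*\<mu>^j] (mod ?P)" by (meson cong_trans)
    show ?thesis unfolding v_def iterF[OF vr] X_def[symmetric] Y_def[symmetric]
      using k1 k2 by (simp add: cong_def)
  qed
  have vmod: "(F p ^^ (j mod d)) v = (F p ^^ j) v" for j
  proof -
    have "[\<mu>^(j mod d) = \<mu>^j] (mod ?P)" using powmod[of j] by (simp add: cong_sym)
    moreover have "[-c*\<mu>^(j mod d) = -c*\<mu>^j] (mod ?P)" using calculation by (intro cong_mult cong_refl)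
    ultimately show ?thesis unfolding vj by (simp add: cong_def)
  qed
  define cs where "cs = map (\<lambda>j. (F p ^^ j) v) [0..<d]"
  have len: "length cs = d" unfolding cs_def by simp
  have nth: "cs ! i = (F p ^^ i) v" if "i < d" for i unfolding cs_def using that by simp
  have ne: "cs \<noteq> []" using dpos len by auto
  have dist: "distinct cs" unfolding distinct_conv_nth len
  proof (intro allI impI)
    fix i j assume ij: "i < d" "j < d" "i \<noteq> j"
    show "cs ! i \<noteq> cs ! j"
    proof
      assume "cs ! i = cs ! j"
      then have "\<mu>^i mod ?P = \<mu>^j mod ?P" using nth ij vj by simp
      then have "[\<mu>^i = \<mu>^j] (mod ?P)" by (simp add: cong_def)
      then show False using inj ij by blast
    qed
  qed
  have sub: "set cs \<subseteq> verts p"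
  proof
    fix w assume "w \<in> set cs"
    then obtain j where "w = (F p ^^ j) v" unfolding cs_def by auto
    then show "w \<in> verts p" unfolding vj verts_def using p5 by auto
  qed
  have step: "cs ! ((i+1) mod length cs) = F p (cs ! i)" if "i < length cs" for i
  proof -
    have "cs ! ((i+1) mod length cs) = (F p ^^ ((i+1) mod d)) v" using nth len dpos by simp
    also have "\<dots> = (F p ^^ Suc i) v" using vmod by simp
    also have "\<dots> = F p (cs ! i)" using nth that len by simp
    finally show ?thesis .
  qed
  have dc: "directed_cycle p cs" by (rule cycle_of[OF ne dist sub step])
  have Q4: "QI p (4 * (p - 1))"
  proof -
    have "\<not> ?P dvd -4"
    proof
      assume "?P dvd -4" then have "?P \<le> 4" by (metis dvd_minus_iff zdvd_imp_le zero_less_numeral)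
      then show False using p5 by simp
    qed
    then have "[(-4)^(p-1) = 1] (mod ?P)" using fermat_int[OF pr] by blast
    then show ?thesis unfolding QI_iff xy4j by simp
  qed
  note op = order_props[OF Q4]
  define k where "k = subadd_order p"
  have kp: "QI p k" using op p5 unfolding k_def by simp
  have dk: "d \<noteq> k"
  proof
    assume dk: "d = k"
    have x1: "[fst (xy k) = 1] (mod ?P)" and y0: "[snd (xy k) = 0] (mod ?P)" using kp unfolding QI_iff by auto
    have "?P dvd (-c)^2 + 1" using c by simp
    from eigen[OF this, of k]
    have "[fst (xy k) + (-c) * snd (xy k) = (1 + (-c))^k] (mod ?P)" .
    moreover have "[fst (xy k) + (-c) * snd (xy k) = 1 + (-c) * 0] (mod ?P)"
      by (intro cong_add cong_mult cong_refl x1 y0)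
    ultimately have "[(1 - c)^d = 1] (mod ?P)" using dk by (metis cong_sym cong_trans diff_conv_add_uminus add.right_neutral mult_zero_right)
    then obtain t where "2 * m = d * t" using ddvd by (auto elim: dvdE)
    moreover have "[((1 - c)^d)^t = 1^t] (mod ?P)" by (intro cong_pow) fact
    ultimately have "[(1 - c)^(2*m) = 1] (mod ?P)" by (simp add: power_mult)
    then have "[1 = -1] (mod ?P)" using nu by (meson cong_sym cong_trans)
    then have "?P dvd 2" by (simp add: cong_iff_dvd_diff)
    then show False using not2 by simp
  qed
  have "secondary_cycle p cs" unfolding secondary_cycle_def primary_cycle_def
    using dc len d1 dk unfolding k_def by simp
  then show ?thesis by blast
qed

theorem theorem7p4:
  fixes p :: nat
  assumes "prime p" and "odd p"
  shows "(p mod 8 = 3 \<or> p mod 8 = 7 \<longrightarrow> \<not> (\<exists>cs. secondary_cycle p cs))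
       \<and> (p mod 8 = 5 \<longrightarrow> (\<exists>cs. secondary_cycle p cs))"
proof (intro conjI impI)
  assume "p mod 8 = 3 \<or> p mod 8 = 7"
  then have "p mod 4 = 3" by presburger
  then show "\<not> (\<exists>cs. secondary_cycle p cs)" using part_a[OF assms(1)] by blast
next
  assume "p mod 8 = 5"
  then show "\<exists>cs. secondary_cycle p cs" using part_b[OF assms(1)] by blast
qed

end
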